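(* Let $f:\mathbb{Z}\times\mathbb{Z}\to\mathbb{C}$ satisfy, for all $m,n,l\in\mathbb{Z}$, $f(m,n)-f(n,m)=n-m$ and $(n-m)f(m+n,l)=f(n,l)f(m,n+l)-f(m,l)f(n,m+l)$. Then $f(m,0)=f(0,0)$ for all $m\in\mathbb{Z}$.
   Context: These two identities are exactly the conditions for $x_mx_n=f(m,n)x_{m+n}$ to be a left-symmetric algebra structure on the Witt algebra (basis $\{x_n\}$, $[x_m,x_n]=(n-m)x_{m+n}$) with commutator equal to the Witt bracket. *)

theory Defs
  imports Complex_Main
begin

end

theory Submission
  imports Defs
begin

lemma key:
  fixes f :: "int \<Rightarrow> int \<Rightarrow> complex"
  assumes comm: "\<And>m n. f m n - f n m = of_int (n - m)"
    and assoc: "\<And>m n l. of_int (n - m) * f (m + n) l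
                  = f n l * f m (n + l) - f m l * f n (m + l)"
    and a1: "f 1 0 = 0"
  shows "f 0 0 = 0"
proof (rule ccontr)
  assume c: "f 0 0 \<noteq> 0"
  have E0: "\<And>k. f 0 k = f k 0 + of_int k"
    using comm by (metis add_diff_cancel_left' diff_0 diff_add_cancel diff_minus_eq_add of_int_minus)
  have P: "\<And>k l. f k l * (f l 0 - f (k+l) 0) = 0"
  proof -
    fix k l
    have "of_int k * f k l = f k l * f 0 (k + l) - f 0 l * f k l"
      using assoc[of 0 k l] by (simp add: algebra_simps)
    then show "f k l * (f l 0 - f (k+l) 0) = 0"
      using E0[of "k+l"] E0[of l] by (simp add: algebra_simps)
  qed
  have f_m11: "f (-1) 1 = 0" using P[of "-1" 1] a1 c by simp
  have cm11: "f (-1) 1 - f 1 (-1) = 2" using comm[of "-1" 1] by simp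
  have f1m1: "f 1 (-1) = -2"
  proof -
    have "f 1 (-1) = f (-1) 1 - 2" using cm11 by (simp add: algebra_simps)
    then show ?thesis using f_m11 by simp
  qed
  have am1: "f (-1) 0 = f 0 0"
    using assoc[of "-1" 1 0] a1 f_m11 f1m1 by simp
  have f2m1: "f 2 (-1) = 0" using P[of 2 "-1"] am1 a1 c by simp
  have fm12: "f (-1) 2 = 3" using comm[of 2 "-1"] f2m1 by simp
  have f11: "f 1 1 = 2/3"
    using assoc[of 1 "-1" 1] E0[of 1] a1 f_m11 fm12 by simp
  have fm21: "f (-2) 1 = 0" using P[of "-2" 1] a1 am1 c by simp
  have fm22: "f (-2) 2 = 0" using assoc[of 1 "-2" 1] f_m11 fm21 f1m1 f11 by simp
  have f2m2: "f 2 (-2) = -4" using comm[of 2 "-2"] fm22 by simp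
  have fm1m1: "f (-1) (-1) = -3/2"
    using assoc[of "-1" 2 "-1"] f1m1 f2m1 f_m11 f2m2 by simp (simp add: field_simps minus_equation_iff)
  have f1m2: "f 1 (-2) = -3" using comm[of 1 "-2"] fm21 by simp
  have cval: "f 0 0 = -5/8"
    using assoc[of 1 "-1" "-1"] E0[of "-1"] am1 fm1m1 f1m2 f1m1 by simp (simp add: field_simps minus_equation_iff eq_diff_eq)
  have a2: "f 2 0 = 0" using assoc[of 2 "-1" 0] a1 f2m1 fm12 by simp
  have a3: "f 3 0 = 0" using assoc[of 2 1 0] a1 a2 by simp
  have fm32: "f (-3) 2 = 0" using P[of "-3" 2] a2 am1 c by simp
  have f2m3: "f 2 (-3) = -5" using comm[of 2 "-3"] fm32 by simp
  have fm33: "f (-3) 3 = 0" using P[of "-3" 3] a3 c by simp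
  have f3m3: "f 3 (-3) = -6" using comm[of 3 "-3"] fm33 by simp
  have f3m1: "f 3 (-1) = 0" using assoc[of 2 1 "-1"] f1m1 a2 f2m1 by simp
  have eq1: "4 * f 0 (-1) = f 2 (-1) * f (-2) 1 - f (-2) (-1) * f 2 (-3)"
    using assoc[of "-2" 2 "-1"] by (simp add: algebra_simps)
  have eq2: "5 * f 1 (-1) = f 3 (-1) * f (-2) 2 - f (-2) (-1) * f 3 (-3)"
    using assoc[of "-2" 3 "-1"] by (simp add: algebra_simps)
  have "f (-2) (-1) = 4 * (f 0 0 - 1) / 5"
    using eq1 E0[of "-1"] am1 f2m1 f2m3 by simp
  then show False
    using eq2 f1m1 f3m1 f3m3 cval by simp
qed

theorem lemma3p1:
  fixes f :: "int \<Rightarrow> int \<Rightarrow> complex"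
  assumes comm: "\<And>m n. f m n - f n m = of_int (n - m)"
    and assoc: "\<And>m n l. of_int (n - m) * f (m + n) l
                  = f n l * f m (n + l) - f m l * f n (m + l)"
  shows "\<forall>m. f m 0 = f 0 0"
proof
  fix m
  have E0: "\<And>k. f 0 k = f k 0 + of_int k"
    using comm by (metis add_diff_cancel_left' diff_0 diff_add_cancel diff_minus_eq_add of_int_minus)
  have "of_int m * f m 0 = f m 0 * f 0 m - f 0 0 * f m 0"
    using assoc[of 0 m 0] by (simp add: algebra_simps)
  then have Pm: "f m 0 * (f 0 0 - f m 0) = 0"
    using E0[of m] E0[of 0] by (simp add: algebra_simps)
  show "f m 0 = f 0 0"
  proof (rule ccontr)
    assume ne: "f m 0 \<noteq> f 0 0"
    then have am: "f m 0 = 0" using Pm by simp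
    then have m0: "m \<noteq> 0" using ne by auto
    define g where "g i j = f (i*m) (j*m) / of_int m" for i j
    have mc: "(of_int m :: complex) \<noteq> 0" using m0 by simp
    have gc: "\<And>i j. g i j - g j i = of_int (j - i)"
    proof -
      fix i j
      have "f (i*m) (j*m) - f (j*m) (i*m) = of_int (j*m - i*m)" by (rule comm)
      then show "g i j - g j i = of_int (j - i)"
        unfolding g_def using mc by (simp add: field_simps left_diff_distrib)
    qed
    have ga: "\<And>i j l. of_int (j - i) * g (i + j) l
                  = g j l * g i (j + l) - g i l * g j (i + l)"
    proof -
      fix i j l
      have "of_int (j*m - i*m) * f (i*m + j*m) (l*m)
          = f (j*m) (l*m) * f (i*m) (j*m + l*m) - f (i*m) (l*m) * f (j*m) (i*m + l*m)"
        by (rule assoc)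
      then show "of_int (j - i) * g (i + j) l
                  = g j l * g i (j + l) - g i l * g j (i + l)"
        unfolding g_def using mc
        by (simp add: field_simps distrib_right left_diff_distrib power2_eq_square)
           (drule arg_cong[where f="\<lambda>x. of_int m * x"], simp add: algebra_simps)
    qed
    have "g 1 0 = 0" unfolding g_def using am by simp
    from key[of g, OF gc ga this] have "f 0 0 = 0" unfolding g_def using mc by simp
    then show False using ne am by simp
  qed
qed

end
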